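(* For every integer $t\ge1$ there exist complex coefficients $a^{(t)}_H$, indexed by insects $H$ and depending only on $H$ and the activities, such that $a^{(t)}_H=0$ unless $H$ is connected and $|H|\le t$, and $p_t(G)=\sum_H a^{(t)}_H\,\mathbf 1[H\sqsubseteq G]$ for every insect $G$.
   Context: Fix a ground set of vertices and, for every hyperedge $e$ (finite vertex set), an activity $\varphi_e:\{+,-\}^e\to\mathbb C$ with $\varphi_e(-,\dots,-)=1$; write $\varphi_e(S)=\varphi_e(\sigma^S|_e)$ where $\sigma^S$ assigns $+$ exactly to the vertices of $S$. An insect is a pair $H=(S,E)$ where $S$ is a finite nonempty vertex set and $E$ is a finite set of hyperedges with $e\cap S\ne\emptyset$ for all $e\in E$; $|H|=|S|$; $H$ is connected if the hypergraph $(S,\{e\cap S:e\in E\})$ is connected. For an insect $G=(S,E)$ and nonempty $S'\subseteq S$, $G^+[S']=(S',\{e\in E:e\cap S'\neq\emptyset\})$; $H\sqsubseteq G$ means $H=G^+[S']$ for some such $S'$, with indicator $\mathbf 1[H\sqsubseteq G]$. For an insect $G=(S_0,E)$ define $e_0(G)=1$ and, for $i\ge1$, $e_i(G)=(-1)^i\sum_{S\subseteq S_0,|S|=i}\prod_{e\in E: e\cap S\ne\emptyset}\varphi_e(S)$ (zero if $i>|S_0|$), and define $p_t(G)$ recursively by Newton's identities $p_t=\sum_{i=1}^{t-1}(-1)^{i-1}p_{t-i}e_i+(-1)^{t-1}t\,e_t$. (When $Z_G(\lambda)=\sum_i(-1)^ie_i(G)\lambda^i$ has roots $r_1,\dots,r_n$,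 $p_t(G)=\sum_j r_j^{-t}$.) *)

theory Defs
  imports Complex_Main
begin

text \<open>The activity is given as phi e A for A a subset of e (the set of
  vertices of e carrying +); phi e {} = 1 is the normalisation. For a vertex set S,
  phi_e(S) of the paper is phi e (S \<inter> e).\<close>

type_synonym 'v insect = "'v set \<times> 'v set set"

definition is_insect :: "'v insect \<Rightarrow> bool" where
  "is_insect H \<longleftrightarrow> finite (fst H) \<and> fst H \<noteq> {} \<and> finite (snd H) \<and>
     (\<forall>e\<in>snd H. finite e \<and> e \<inter> fst H \<noteq> {})"

definition insect_size :: "'v insect \<Rightarrow> nat" where
  "insect_size H = card (fst H)"

definition adj_rel :: "'v insect \<Rightarrow> ('v \<times> 'v) set" where
  "adj_rel H = {(u, w). \<exists>e\<in>snd H. u \<in> e \<inter> fst H \<and> w \<in> e \<inter> fst H}"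

definition insect_connected :: "'v insect \<Rightarrow> bool" where
  "insect_connected H \<longleftrightarrow> (\<forall>u\<in>fst H. \<forall>w\<in>fst H. (u, w) \<in> (adj_rel H)\<^sup>*)"

definition induced_plus :: "'v insect \<Rightarrow> 'v set \<Rightarrow> 'v insect" where
  "induced_plus G S' = (S', {e \<in> snd G. e \<inter> S' \<noteq> {}})"

definition sub_insect :: "'v insect \<Rightarrow> 'v insect \<Rightarrow> bool" where
  "sub_insect H G \<longleftrightarrow> (\<exists>S'. S' \<noteq> {} \<and> S' \<subseteq> fst G \<and> H = induced_plus G S')"

definition elem_sym :: "('v set \<Rightarrow> 'v set \<Rightarrow> complex) \<Rightarrow> 'v insect \<Rightarrow> nat \<Rightarrow> complex" where
  "elem_sym \<phi> G i = (if i = 0 then 1 else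
     (-1) ^ i * (\<Sum>S\<in>{S. S \<subseteq> fst G \<and> card S = i}.
        \<Prod>e\<in>{e \<in> snd G. e \<inter> S \<noteq> {}}. \<phi> e (S \<inter> e)))"

text \<open>Newton's identities: p_t = sum_{i=1}^{t-1} (-1)^(i-1) p_{t-i} e_i + (-1)^(t-1) t e_t
  for t \<ge> 1 (the value at t = 0 is an irrelevant convention).\<close>
function newton_p :: "(nat \<Rightarrow> complex) \<Rightarrow> nat \<Rightarrow> complex" where
  "newton_p e t = (if t = 0 then 0 else
     (\<Sum>i\<in>{1..<t}. (-1) ^ (i - 1) * newton_p e (t - i) * e i)
       + (-1) ^ (t - 1) * of_nat t * e t)"
  by auto
termination
  by (relation "measure snd") auto

definition power_sum :: "('v set \<Rightarrow> 'v set \<Rightarrow> complex) \<Rightarrow> nat \<Rightarrow> 'v insect \<Rightarrow> complex" where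
  "power_sum \<phi> t G = newton_p (elem_sym \<phi> G) t"

end

theory Submission imports Defs "HOL-Computational_Algebra.Formal_Power_Series"
begin

definition Esig :: "(nat \<Rightarrow> complex) \<Rightarrow> complex fps" where
  "Esig e = Abs_fps (\<lambda>i. (-1)^i * e i)"

definition Pfps :: "(nat \<Rightarrow> complex) \<Rightarrow> complex fps" where
  "Pfps e = Abs_fps (newton_p e)"

lemma newton_p0[simp]: "newton_p e 0 = 0"
  by (subst newton_p.simps) simp

lemma newton_fps:
  assumes e0: "e 0 = 1"
  shows "Esig e * Pfps e = - (fps_X * fps_deriv (Esig e))"
proof (rule fps_ext)
  fix n
  show "fps_nth (Esig e * Pfps e) n = fps_nth (- (fps_X * fps_deriv (Esig e))) n"
  proof (cases "n = 0")
    case True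
    then show ?thesis by (simp add: Pfps_def Esig_def)
  next
    case False
    have rec: "newton_p e n = (\<Sum>i\<in>{1..<n}. (-1) ^ (i - 1) * newton_p e (n - i) * e i)
       + (-1) ^ (n - 1) * of_nat n * e n"
      using False by (subst newton_p.simps) simp
    have split: "{0..n} = insert 0 (insert n {1..<n})" using False by auto
    have "fps_nth (Esig e * Pfps e) n = (\<Sum>i=0..n. (-1)^i * e i * newton_p e (n - i))"
      by (simp add: fps_mult_nth Esig_def Pfps_def)
    also have "\<dots> = newton_p e n + (\<Sum>i\<in>{1..<n}. (-1)^i * e i * newton_p e (n - i))"
      using False e0 by (simp add: split)
    also have "(\<Sum>i\<in>{1..<n}. (-1)^i * e i * newton_p e (n - i))
       = - (\<Sum>i\<in>{1..<n}. (-1) ^ (i - 1) * newton_p e (n - i) * e i)"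
      by (simp add: sum_negf[symmetric] power_eq_if) (rule sum.cong; auto simp: power_eq_if)
    also have "newton_p e n + - (\<Sum>i\<in>{1..<n}. (-1) ^ (i - 1) * newton_p e (n - i) * e i)
       = (-1) ^ (n - 1) * of_nat n * e n" using rec by simp
    also have "\<dots> = fps_nth (- (fps_X * fps_deriv (Esig e))) n"
      using False by (cases n) (simp_all add: Esig_def fps_X_mult_nth)
    finally show ?thesis .
  qed
qed

lemma newton_add:
  assumes "e 0 = 1" "ea 0 = 1" "eb 0 = 1" and prod: "Esig e = Esig ea * Esig eb"
  shows "newton_p e t = newton_p ea t + newton_p eb t"
proof -
  let ?E = "Esig e" and ?A = "Esig ea" and ?B = "Esig eb"
  have "?E * (Pfps ea + Pfps eb) = ?B * (?A * Pfps ea) + ?A * (?B * Pfps eb)"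
    by (simp add: prod algebra_simps)
  also have "\<dots> = - (fps_X * fps_deriv ?E)"
    using newton_fps[of ea] newton_fps[of eb] assms by (simp add: prod algebra_simps)
  also have "\<dots> = ?E * Pfps e" using newton_fps[of e] assms by simp
  finally have eq: "?E * (Pfps ea + Pfps eb) = ?E * Pfps e" .
  have "?E \<noteq> 0"
  proof
    assume "?E = 0" then have "fps_nth ?E 0 = 0" by simp
    then show False using assms by (simp add: Esig_def)
  qed
  then have "Pfps ea + Pfps eb = Pfps e" using eq by simp
  then have "fps_nth (Pfps ea + Pfps eb) t = fps_nth (Pfps e) t" by simp
  then show ?thesis by (simp add: Pfps_def)
qed


definition Pne :: "'v set \<Rightarrow> 'v set set" where
  "Pne S = {U. U \<subseteq> S \<and> U \<noteq> {}}"

definition loc :: "nat \<Rightarrow> ('v insect \<Rightarrow> complex) \<Rightarrow> ('v insect \<Rightarrow> complex) \<Rightarrow> bool" where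
  "loc t f c \<longleftrightarrow> (\<forall>H. c H \<noteq> 0 \<longrightarrow> is_insect H \<and> insect_size H \<le> t) \<and>
     (\<forall>G. is_insect G \<longrightarrow> f G = (\<Sum>U\<in>Pne (fst G). c (induced_plus G U)))"

lemma fst_ip[simp]: "fst (induced_plus G U) = U"
  and snd_ip[simp]: "snd (induced_plus G U) = {e\<in>snd G. e \<inter> U \<noteq> {}}"
  by (simp_all add: induced_plus_def)

lemma finite_Pne[simp]: "finite S \<Longrightarrow> finite (Pne S)"
  unfolding Pne_def by simp

lemma ip_insect: "is_insect G \<Longrightarrow> U \<subseteq> fst G \<Longrightarrow> U \<noteq> {} \<Longrightarrow> is_insect (induced_plus G U)"
  unfolding is_insect_def by (auto intro: finite_subset)

lemma ip_ip[simp]: "V \<subseteq> U \<Longrightarrow> induced_plus (induced_plus G U) V = induced_plus G V"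
  by (auto simp: induced_plus_def)

lemma ip_self: "is_insect H \<Longrightarrow> induced_plus H (fst H) = H"
  unfolding is_insect_def induced_plus_def by (cases H) auto

lemma loc_mono: "loc s f c \<Longrightarrow> s \<le> t \<Longrightarrow> loc t f c"
  unfolding loc_def by force

lemma loc_add: "loc t f c \<Longrightarrow> loc t g d \<Longrightarrow> loc t (\<lambda>G. f G + g G) (\<lambda>H. c H + d H)"
  unfolding loc_def
proof (intro conjI)
  assume a: "(\<forall>H. c H \<noteq> 0 \<longrightarrow> is_insect H \<and> insect_size H \<le> t) \<and>
     (\<forall>G. is_insect G \<longrightarrow> f G = (\<Sum>U\<in>Pne (fst G). c (induced_plus G U)))"
     and b: "(\<forall>H. d H \<noteq> 0 \<longrightarrow> is_insect H \<and> insect_size H \<le> t) \<and>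
     (\<forall>G. is_insect G \<longrightarrow> g G = (\<Sum>U\<in>Pne (fst G). d (induced_plus G U)))"
  show "\<forall>H. c H + d H \<noteq> 0 \<longrightarrow> is_insect H \<and> insect_size H \<le> t"
  proof (intro allI impI)
    fix H assume "c H + d H \<noteq> 0"
    then have "c H \<noteq> 0 \<or> d H \<noteq> 0" by auto
    then show "is_insect H \<and> insect_size H \<le> t" using a b by blast
  qed
  show "\<forall>G. is_insect G \<longrightarrow> f G + g G = (\<Sum>U\<in>Pne (fst G). c (induced_plus G U) + d (induced_plus G U))"
    using a b by (simp add: sum.distrib)
qed

lemma loc_scale: "loc t f c \<Longrightarrow> loc t (\<lambda>G. k * f G) (\<lambda>H. k * c H)"
  unfolding loc_def by (auto simp: sum_distrib_left)

lemma loc_zero: "loc t (\<lambda>G. 0) (\<lambda>H. 0)"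
  unfolding loc_def by simp

definition cmul :: "('v insect \<Rightarrow> complex) \<Rightarrow> ('v insect \<Rightarrow> complex) \<Rightarrow> 'v insect \<Rightarrow> complex" where
  "cmul c d H = (if is_insect H then
     (\<Sum>p\<in>{p \<in> Pne (fst H) \<times> Pne (fst H). fst p \<union> snd p = fst H}.
        c (induced_plus H (fst p)) * d (induced_plus H (snd p))) else 0)"

lemma loc_mult:
  fixes c d :: "'v insect \<Rightarrow> complex"
  assumes lf: "loc s f c" and lg: "loc r g d"
  shows "loc (s + r) (\<lambda>G. f G * g G) (cmul c d)"
  unfolding loc_def
proof (rule conjI; intro allI impI)
  fix H assume nz: "cmul c d H \<noteq> 0"
  then have ins: "is_insect H" by (simp add: cmul_def split: if_splits)
  with nz have "(\<Sum>p\<in>{p \<in> Pne (fst H) \<times> Pne (fst H). fst p \<union> snd p = fst H}.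
        c (induced_plus H (fst p)) * d (induced_plus H (snd p))) \<noteq> 0" by (simp add: cmul_def)
  then obtain p where "p \<in> {p \<in> Pne (fst H) \<times> Pne (fst H). fst p \<union> snd p = fst H}"
    and t: "c (induced_plus H (fst p)) * d (induced_plus H (snd p)) \<noteq> 0"
    by (meson sum.not_neutral_contains_not_neutral)
  then have p: "p \<in> Pne (fst H) \<times> Pne (fst H)" "fst p \<union> snd p = fst H" by auto
  from t have c0: "c (induced_plus H (fst p)) \<noteq> 0" and d0: "d (induced_plus H (snd p)) \<noteq> 0" by auto
  have "insect_size (induced_plus H (fst p)) \<le> s" using lf c0 unfolding loc_def by blast
  moreover have "insect_size (induced_plus H (snd p)) \<le> r" using lg d0 unfolding loc_def by blast
  ultimately have "card (fst p) \<le> s" "card (snd p) \<le> r" by (simp_all add: insect_size_def)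
  then have "card (fst H) \<le> s + r" using p(2) card_Un_le[of "fst p" "snd p"] by simp
  then show "is_insect H \<and> insect_size H \<le> s + r" using ins by (simp add: insect_size_def)
next
  fix G :: "'v insect" assume G: "is_insect G"
  have fin: "finite (fst G)" using G by (simp add: is_insect_def)
  let ?P = "Pne (fst G)"
  let ?h = "\<lambda>p. c (induced_plus G (fst p)) * d (induced_plus G (snd p))"
  have "f G * g G = (\<Sum>U\<in>?P. c (induced_plus G U)) * (\<Sum>V\<in>?P. d (induced_plus G V))"
  proof -
    have "f G = (\<Sum>U\<in>?P. c (induced_plus G U))" using lf G unfolding loc_def by blast
    moreover have "g G = (\<Sum>V\<in>?P. d (induced_plus G V))" using lg G unfolding loc_def by blast
    ultimately show ?thesis by simp
  qed
  also have "\<dots> = (\<Sum>p\<in>?P \<times> ?P. ?h p)"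
    by (simp add: sum_product sum.cartesian_product case_prod_beta')
  also have "\<dots> = (\<Sum>W\<in>?P. \<Sum>p\<in>{p. p \<in> ?P \<times> ?P \<and> fst p \<union> snd p = W}. ?h p)"
    by (rule sum.group[symmetric]) (use fin in \<open>auto simp: Pne_def\<close>)
  also have "\<dots> = (\<Sum>W\<in>?P. cmul c d (induced_plus G W))"
  proof (rule sum.cong[OF refl])
    fix W assume W: "W \<in> ?P"
    then have ins: "is_insect (induced_plus G W)" using G ip_insect[of G W] by (simp add: Pne_def)
    have set: "{p. p \<in> ?P \<times> ?P \<and> fst p \<union> snd p = W} = {p \<in> Pne W \<times> Pne W. fst p \<union> snd p = W}"
      using W by (auto simp: Pne_def)
    show "(\<Sum>p\<in>{p. p \<in> ?P \<times> ?P \<and> fst p \<union> snd p = W}. ?h p) = cmul c d (induced_plus G W)"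
      unfolding set cmul_def using ins by (auto intro!: sum.cong)
  qed
  finally show "f G * g G = (\<Sum>W\<in>?P. cmul c d (induced_plus G W))" .
qed

definition wt :: "('v set \<Rightarrow> 'v set \<Rightarrow> complex) \<Rightarrow> 'v insect \<Rightarrow> 'v set \<Rightarrow> complex" where
  "wt \<phi> H S = (\<Prod>e\<in>{e \<in> snd H. e \<inter> S \<noteq> {}}. \<phi> e (S \<inter> e))"

definition ce :: "('v set \<Rightarrow> 'v set \<Rightarrow> complex) \<Rightarrow> nat \<Rightarrow> 'v insect \<Rightarrow> complex" where
  "ce \<phi> i H = (if is_insect H \<and> card (fst H) = i then (-1)^i * wt \<phi> H (fst H) else 0)"

lemma loc_e:
  fixes \<phi> :: "'v set \<Rightarrow> 'v set \<Rightarrow> complex"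
  assumes "i \<ge> 1"
  shows "loc i (\<lambda>G. elem_sym \<phi> G i) (ce \<phi> i)"
  unfolding loc_def
proof (rule conjI; intro allI impI)
  fix H assume "ce \<phi> i H \<noteq> 0"
  then show "is_insect H \<and> insect_size H \<le> i"
    by (simp add: ce_def insect_size_def split: if_splits)
next
  fix G :: "'v insect" assume G: "is_insect G"
  have fin: "finite (fst G)" using G by (simp add: is_insect_def)
  have "elem_sym \<phi> G i = (\<Sum>S\<in>{S. S \<subseteq> fst G \<and> card S = i}. (-1)^i * wt \<phi> G S)"
    using assms by (simp add: elem_sym_def wt_def sum_distrib_left)
  also have "\<dots> = (\<Sum>U\<in>Pne (fst G). if card U = i then (-1)^i * wt \<phi> G U else 0)"
    by (rule sum.mono_neutral_cong_left) (use fin assms in \<open>auto simp: Pne_def\<close>)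
  also have "\<dots> = (\<Sum>U\<in>Pne (fst G). ce \<phi> i (induced_plus G U))"
    using G by (intro sum.cong) (auto simp: ce_def ip_insect Pne_def wt_def intro!: prod.cong)
  finally show "elem_sym \<phi> G i = (\<Sum>U\<in>Pne (fst G). ce \<phi> i (induced_plus G U))" .
qed

lemma loc_sum:
  assumes "finite I" "\<forall>i\<in>I. \<exists>c. loc t (f i) c"
  shows "\<exists>c. loc t (\<lambda>G. \<Sum>i\<in>I. f i G) c"
  using assms
proof (induction I rule: finite_induct)
  case empty then show ?case using loc_zero by auto
next
  case (insert x F)
  then obtain c d where "loc t (f x) c" "loc t (\<lambda>G. \<Sum>i\<in>F. f i G) d" by auto
  from loc_add[OF this] show ?case using insert by auto
qed

lemma power_sum_loc: "t \<ge> 1 \<Longrightarrow> \<exists>c. loc t (power_sum \<phi> t) c"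
proof (induction t rule: less_induct)
  case (less t)
  have rec: "power_sum \<phi> t = (\<lambda>G. (\<Sum>i\<in>{1..<t}. (-1) ^ (i - 1) * power_sum \<phi> (t - i) G * elem_sym \<phi> G i)
       + (-1) ^ (t - 1) * of_nat t * elem_sym \<phi> G t)"
    using less.prems by (intro ext) (simp add: power_sum_def newton_p.simps[of _ t])
  have "\<forall>i\<in>{1..<t}. \<exists>c. loc t (\<lambda>G. (-1) ^ (i - 1) * power_sum \<phi> (t - i) G * elem_sym \<phi> G i) c"
  proof
    fix i assume i: "i \<in> {1..<t}"
    then have "t - i < t" "1 \<le> t - i" by auto
    then obtain c where c: "loc (t - i) (power_sum \<phi> (t - i)) c" using less.IH[of "t - i"] by blast
    have "loc (t - i + i) (\<lambda>G. power_sum \<phi> (t - i) G * elem_sym \<phi> G i) (cmul c (ce \<phi> i))"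
      using loc_mult[OF c loc_e[of i \<phi>]] i by auto
    then have "loc t (\<lambda>G. power_sum \<phi> (t - i) G * elem_sym \<phi> G i) (cmul c (ce \<phi> i))"
      using i by simp
    from loc_scale[OF this, of "(-1) ^ (i - 1)"] show "\<exists>c. loc t (\<lambda>G. (-1) ^ (i - 1) * power_sum \<phi> (t - i) G * elem_sym \<phi> G i) c"
      by (auto simp: mult.assoc)
  qed
  then obtain c1 where c1: "loc t (\<lambda>G. \<Sum>i\<in>{1..<t}. (-1) ^ (i - 1) * power_sum \<phi> (t - i) G * elem_sym \<phi> G i) c1"
    using loc_sum[of "{1..<t}" t "\<lambda>i G. (-1) ^ (i - 1) * power_sum \<phi> (t - i) G * elem_sym \<phi> G i"] by blast
  have c2: "loc t (\<lambda>G. (-1) ^ (t - 1) * of_nat t * elem_sym \<phi> G t) (\<lambda>H. (-1) ^ (t - 1) * of_nat t * ce \<phi> t H)"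
    using loc_scale[OF loc_e[OF less.prems]] .
  show ?case using loc_add[OF c1 c2] rec by auto
qed


definition split :: "'v insect \<Rightarrow> 'v set \<Rightarrow> 'v set \<Rightarrow> bool" where
  "split H A B \<longleftrightarrow> A \<union> B = fst H \<and> A \<inter> B = {} \<and> A \<noteq> {} \<and> B \<noteq> {} \<and>
     (\<forall>e\<in>snd H. e \<inter> A = {} \<or> e \<inter> B = {})"

lemma not_conn_split:
  assumes "\<not> insect_connected H"
  shows "\<exists>A B. split H A B"
proof -
  from assms obtain u w where u: "u \<in> fst H" and w: "w \<in> fst H" and nr: "(u, w) \<notin> (adj_rel H)\<^sup>*"
    unfolding insect_connected_def by blast
  define A where "A = {x \<in> fst H. (u, x) \<in> (adj_rel H)\<^sup>*}"
  define B where "B = fst H - A"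
  have "u \<in> A" using u by (simp add: A_def)
  moreover have "w \<in> B" using w nr by (simp add: A_def B_def)
  moreover have "\<forall>e\<in>snd H. e \<inter> A = {} \<or> e \<inter> B = {}"
  proof (rule ccontr)
    assume "\<not> ?thesis"
    then obtain e x y where e: "e \<in> snd H" "x \<in> e" "x \<in> A" "y \<in> e" "y \<in> B" by blast
    then have "(x, y) \<in> adj_rel H" unfolding adj_rel_def A_def B_def by auto
    with e(3) have "(u, y) \<in> (adj_rel H)\<^sup>*" unfolding A_def by auto
    then show False using e(5) by (auto simp: A_def B_def)
  qed
  moreover have "A \<union> B = fst H" "A \<inter> B = {}" by (auto simp: A_def B_def)
  ultimately show ?thesis unfolding split_def by blast
qed

lemma split_sub:
  assumes "split H A B" "U \<subseteq> fst H" "U \<inter> A \<noteq> {}" "U \<inter> B \<noteq> {}"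
  shows "split (induced_plus H U) (U \<inter> A) (U \<inter> B)"
  using assms unfolding split_def by auto

lemma sum_Pow_Un:
  assumes "finite A" "finite B" "A \<inter> B = {}"
  shows "sum f (Pow (A \<union> B)) = (\<Sum>S1\<in>Pow A. \<Sum>S2\<in>Pow B. f (S1 \<union> S2))"
proof -
  have bij: "bij_betw (\<lambda>(x, y). x \<union> y) (Pow A \<times> Pow B) (Pow (A \<union> B))"
    by (rule bij_betwI[where g = "\<lambda>S. (S \<inter> A, S \<inter> B)"]) (use assms in auto)
  have "sum f (Pow (A \<union> B)) = sum (f \<circ> (\<lambda>(x, y). x \<union> y)) (Pow A \<times> Pow B)"
    using sum.reindex_bij_betw[OF bij, of f] by simp
  also have "\<dots> = (\<Sum>S1\<in>Pow A. \<Sum>S2\<in>Pow B. f (S1 \<union> S2))"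
    by (simp add: sum.cartesian_product case_prod_beta')
  finally show ?thesis .
qed

lemma wt_split:
  assumes sp: "split H A B" and S1: "S1 \<subseteq> A" and S2: "S2 \<subseteq> B" and fin: "finite (snd H)"
  shows "wt \<phi> H (S1 \<union> S2) = wt \<phi> (induced_plus H A) S1 * wt \<phi> (induced_plus H B) S2"
proof -
  let ?X1 = "{e \<in> {e \<in> snd H. e \<inter> A \<noteq> {}}. e \<inter> S1 \<noteq> {}}"
  let ?X2 = "{e \<in> {e \<in> snd H. e \<inter> B \<noteq> {}}. e \<inter> S2 \<noteq> {}}"
  have eqs: "{e \<in> snd H. e \<inter> (S1 \<union> S2) \<noteq> {}} = ?X1 \<union> ?X2" using S1 S2 by auto
  have disj: "?X1 \<inter> ?X2 = {}" using sp unfolding split_def by auto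
  have "wt \<phi> H (S1 \<union> S2) = (\<Prod>e\<in>?X1 \<union> ?X2. \<phi> e ((S1 \<union> S2) \<inter> e))"
    unfolding wt_def eqs ..
  also have "\<dots> = (\<Prod>e\<in>?X1. \<phi> e ((S1 \<union> S2) \<inter> e)) * (\<Prod>e\<in>?X2. \<phi> e ((S1 \<union> S2) \<inter> e))"
    by (rule prod.union_disjoint) (use fin disj in auto)
  also have "(\<Prod>e\<in>?X1. \<phi> e ((S1 \<union> S2) \<inter> e)) = (\<Prod>e\<in>?X1. \<phi> e (S1 \<inter> e))"
  proof (rule prod.cong[OF refl])
    fix e assume "e \<in> ?X1"
    then have "e \<inter> B = {}" using sp unfolding split_def by auto
    then show "\<phi> e ((S1 \<union> S2) \<inter> e) = \<phi> e (S1 \<inter> e)"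
    proof -
      have "(S1 \<union> S2) \<inter> e = S1 \<inter> e" using \<open>e \<inter> B = {}\<close> S2 by blast
      then show ?thesis by simp
    qed
  qed
  also have "(\<Prod>e\<in>?X2. \<phi> e ((S1 \<union> S2) \<inter> e)) = (\<Prod>e\<in>?X2. \<phi> e (S2 \<inter> e))"
  proof (rule prod.cong[OF refl])
    fix e assume "e \<in> ?X2"
    then have "e \<inter> A = {}" using sp unfolding split_def by auto
    then have "(S1 \<union> S2) \<inter> e = S2 \<inter> e" using S1 by blast
    then show "\<phi> e ((S1 \<union> S2) \<inter> e) = \<phi> e (S2 \<inter> e)" by simp
  qed
  finally show ?thesis by (simp add: wt_def)
qed

definition Wf :: "('v set \<Rightarrow> 'v set \<Rightarrow> complex) \<Rightarrow> 'v insect \<Rightarrow> complex fps" where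
  "Wf \<phi> H = (\<Sum>S\<in>Pow (fst H). fps_const (wt \<phi> H S) * fps_X ^ card S)"

lemma Esig_Wf:
  assumes fin: "finite (fst H)"
  shows "Esig (elem_sym \<phi> H) = Wf \<phi> H"
proof (rule fps_ext)
  fix n
  have "fps_nth (Wf \<phi> H) n = (\<Sum>S\<in>Pow (fst H). if card S = n then wt \<phi> H S else 0)"
    by (simp add: Wf_def fps_sum_nth fps_const_mult_left eq_commute[of n] if_distrib cong: if_cong)
  also have "\<dots> = (\<Sum>S\<in>{S. S \<subseteq> fst H \<and> card S = n}. wt \<phi> H S)"
    by (rule sum.mono_neutral_cong_right) (use fin in auto)
  finally have W: "fps_nth (Wf \<phi> H) n = (\<Sum>S\<in>{S. S \<subseteq> fst H \<and> card S = n}. wt \<phi> H S)" .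
  show "fps_nth (Esig (elem_sym \<phi> H)) n = fps_nth (Wf \<phi> H) n"
  proof (cases "n = 0")
    case True
    have "{S. S \<subseteq> fst H \<and> card S = 0} = {{}}" using fin by (auto dest: finite_subset)
    then show ?thesis using True W by (simp add: Esig_def elem_sym_def wt_def)
  next
    case False
    then show ?thesis using W
      by (simp add: Esig_def elem_sym_def wt_def mult.assoc[symmetric] power_mult_distrib[symmetric])
  qed
qed

lemma Wf_split:
  assumes H: "is_insect H" and sp: "split H A B"
  shows "Wf \<phi> H = Wf \<phi> (induced_plus H A) * Wf \<phi> (induced_plus H B)"
proof -
  have finH: "finite (fst H)" "finite (snd H)" using H by (auto simp: is_insect_def)
  have AB: "fst H = A \<union> B" "A \<inter> B = {}" using sp by (auto simp: split_def)
  then have fA: "finite A" "finite B" using finH by auto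
  have "Wf \<phi> H = (\<Sum>S1\<in>Pow A. \<Sum>S2\<in>Pow B. fps_const (wt \<phi> H (S1 \<union> S2)) * fps_X ^ card (S1 \<union> S2))"
    unfolding Wf_def AB(1) by (rule sum_Pow_Un) (use fA AB in auto)
  also have "\<dots> = (\<Sum>S1\<in>Pow A. \<Sum>S2\<in>Pow B.
      (fps_const (wt \<phi> (induced_plus H A) S1) * fps_X ^ card S1) *
      (fps_const (wt \<phi> (induced_plus H B) S2) * fps_X ^ card S2))"
  proof (intro sum.cong refl)
    fix S1 S2 assume S: "S1 \<in> Pow A" "S2 \<in> Pow B"
    then have "card (S1 \<union> S2) = card S1 + card S2"
      using fA AB by (intro card_Un_disjoint) (auto intro: finite_subset)
    then show "fps_const (wt \<phi> H (S1 \<union> S2)) * fps_X ^ card (S1 \<union> S2) =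
      (fps_const (wt \<phi> (induced_plus H A) S1) * fps_X ^ card S1) *
      (fps_const (wt \<phi> (induced_plus H B) S2) * fps_X ^ card S2)"
      using wt_split[OF sp _ _ finH(2), of S1 S2 \<phi>] S
      by (simp add: power_add mult_ac fps_const_mult[symmetric] del: fps_const_mult)
  qed
  also have "\<dots> = Wf \<phi> (induced_plus H A) * Wf \<phi> (induced_plus H B)"
    by (simp add: Wf_def sum_product)
  finally show ?thesis .
qed

lemma power_sum_split:
  assumes H: "is_insect H" and sp: "split H A B"
  shows "power_sum \<phi> t H = power_sum \<phi> t (induced_plus H A) + power_sum \<phi> t (induced_plus H B)"
proof -
  have fin: "finite (fst H)" using H by (simp add: is_insect_def)
  have AB: "A \<subseteq> fst H" "B \<subseteq> fst H" using sp by (auto simp: split_def)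
  have fAB: "finite A" "finite B" using fin AB by (auto intro: finite_subset)
  have "Esig (elem_sym \<phi> H) = Esig (elem_sym \<phi> (induced_plus H A)) * Esig (elem_sym \<phi> (induced_plus H B))"
    using Esig_Wf[OF fin, of \<phi>] Esig_Wf[of "induced_plus H A" \<phi>] Esig_Wf[of "induced_plus H B" \<phi>]
      Wf_split[OF H sp, of \<phi>] fAB by simp
  then show ?thesis unfolding power_sum_def
    by (intro newton_add) (simp_all add: elem_sym_def)
qed


lemma sum_sub_ip:
  assumes lf: "loc t f c" and H: "is_insect H" and A: "A \<subseteq> fst H" "A \<noteq> {}"
  shows "(\<Sum>U\<in>Pne A. c (induced_plus H U)) = f (induced_plus H A)"
proof -
  have "is_insect (induced_plus H A)" using ip_insect[OF H A] .
  then have "f (induced_plus H A) = (\<Sum>U\<in>Pne A. c (induced_plus (induced_plus H A) U))"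
    using lf unfolding loc_def by (metis fst_ip)
  also have "\<dots> = (\<Sum>U\<in>Pne A. c (induced_plus H U))"
    by (intro sum.cong refl) (simp add: Pne_def)
  finally show ?thesis by simp
qed

lemma loc_vanish:
  assumes lf: "loc t f c"
    and add: "\<And>H A B. is_insect H \<Longrightarrow> split H A B \<Longrightarrow> f H = f (induced_plus H A) + f (induced_plus H B)"
  shows "is_insect H \<Longrightarrow> split H A B \<Longrightarrow> c H = 0"
proof (induction "card (fst H)" arbitrary: H A B rule: less_induct)
  case less
  note H = less.prems(1) and sp = less.prems(2)
  have fin: "finite (fst H)" using H by (simp add: is_insect_def)
  have AB: "fst H = A \<union> B" "A \<inter> B = {}" "A \<noteq> {}" "B \<noteq> {}" using sp by (auto simp: split_def)
  define M where "M = {U \<in> Pne (fst H). U \<inter> A \<noteq> {} \<and> U \<inter> B \<noteq> {}}"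
  have part: "Pne (fst H) = Pne A \<union> (Pne B \<union> M)"
    using AB by (auto simp: Pne_def M_def)
  have fins: "finite (Pne A)" "finite (Pne B)" "finite M"
    using fin AB by (auto simp: M_def)
  have d1: "Pne A \<inter> (Pne B \<union> M) = {}" and d2: "Pne B \<inter> M = {}"
    using AB by (auto simp: Pne_def M_def)
  have fH: "f H = (\<Sum>U\<in>Pne (fst H). c (induced_plus H U))" using lf H unfolding loc_def by blast
  also have "\<dots> = (\<Sum>U\<in>Pne A. c (induced_plus H U)) + ((\<Sum>U\<in>Pne B. c (induced_plus H U)) + (\<Sum>U\<in>M. c (induced_plus H U)))"
    unfolding part using fins d1 d2 by (simp add: sum.union_disjoint)
  also have "(\<Sum>U\<in>M. c (induced_plus H U)) = (\<Sum>U\<in>{fst H}. c (induced_plus H U))"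
  proof (rule sum.mono_neutral_right)
    show "finite M" by fact
    show "{fst H} \<subseteq> M" using AB by (auto simp: M_def Pne_def)
    show "\<forall>U\<in>M - {fst H}. c (induced_plus H U) = 0"
    proof
      fix U assume U: "U \<in> M - {fst H}"
      then have Us: "U \<subseteq> fst H" "U \<noteq> fst H" "U \<inter> A \<noteq> {}" "U \<inter> B \<noteq> {}" "U \<noteq> {}"
        by (auto simp: M_def Pne_def)
      have "card U < card (fst H)" using Us fin by (simp add: psubset_card_mono)
      then show "c (induced_plus H U) = 0"
        using less.hyps[of "induced_plus H U" "U \<inter> A" "U \<inter> B"] ip_insect[OF H Us(1) Us(5)]
          split_sub[OF sp Us(1) Us(3) Us(4)] by simp
    qed
  qed
  also have "(\<Sum>U\<in>{fst H}. c (induced_plus H U)) = c (induced_plus H (fst H))" by simp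
  also have "induced_plus H (fst H) = H" using ip_self[OF H] .
  finally have "f H = f (induced_plus H A) + (f (induced_plus H B) + c H)"
    using sum_sub_ip[OF lf H] AB by simp
  then show ?case using add[OF H sp] by simp
qed

theorem mainTheorem11:
  fixes \<phi> :: "'v set \<Rightarrow> 'v set \<Rightarrow> complex" and t :: nat
  assumes "\<forall>e. \<phi> e {} = 1"
    and "t \<ge> 1"
  shows "\<exists>a :: 'v insect \<Rightarrow> complex.
     (\<forall>H. a H \<noteq> 0 \<longrightarrow> is_insect H \<and> insect_connected H \<and> insect_size H \<le> t) \<and>
     (\<forall>G. is_insect G \<longrightarrow>
        power_sum \<phi> t G = (\<Sum>H\<in>{H. sub_insect H G}. a H))"
proof -
  obtain c where lc: "loc t (power_sum \<phi> t) c" using power_sum_loc[OF assms(2)] by blast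
  have van: "c H = 0" if "is_insect H" "split H A B" for H A B
    by (rule loc_vanish[OF lc power_sum_split that])
  show ?thesis
  proof (rule exI[of _ c], rule conjI; intro allI impI)
    fix H assume nz: "c H \<noteq> 0"
    then have H: "is_insect H" "insect_size H \<le> t" using lc unfolding loc_def by blast+
    have "insect_connected H"
    proof (rule ccontr)
      assume "\<not> insect_connected H"
      then obtain A B where "split H A B" using not_conn_split by blast
      then show False using van[OF H(1)] nz by blast
    qed
    then show "is_insect H \<and> insect_connected H \<and> insect_size H \<le> t" using H by blast
  next
    fix G :: "'v insect" assume G: "is_insect G"
    have set: "{H. sub_insect H G} = induced_plus G ` Pne (fst G)"
      by (auto simp: sub_insect_def Pne_def)
    have inj: "inj_on (induced_plus G) (Pne (fst G))"
      by (rule inj_onI) (metis fst_ip)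
    have "(\<Sum>H\<in>{H. sub_insect H G}. c H) = (\<Sum>U\<in>Pne (fst G). c (induced_plus G U))"
      unfolding set by (rule sum.reindex[OF inj, unfolded comp_def])
    also have "\<dots> = power_sum \<phi> t G" using lc G unfolding loc_def by (metis (no_types))
    finally show "power_sum \<phi> t G = (\<Sum>H\<in>{H. sub_insect H G}. c H)" by simp
  qed
qed

end
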